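(* Let $\mathcal{A}=M_2(\mathbb{F})$ be endowed with an involution $*$ of the first kind and let $f$ be a multilinear $*$-polynomial. Let $\mathcal{S}$, $\mathcal{K}$, $\mathcal{Z}$ denote the sets of symmetric, skew-symmetric and central (scalar) elements of $\mathcal{A}$. Suppose one of the following holds: (1) $*$ is the transpose involution and $\mathbb{F}=\mathbb{R}$; (2) $*$ is the symplectic involution $\begin{pmatrix}a&b\\c&d\end{pmatrix}^*=\begin{pmatrix}d&-b\\-c&a\end{pmatrix}$ and $\mathbb{F}$ is an arbitrary field. Then the linear span of the image $f(\mathcal{A})$ is one of the subspaces \[ 0,\ \mathcal{Z},\ \mathcal{K},\ [\mathcal{S},\mathcal{K}],\ \mathcal{S},\ \mathcal{Z}+\mathcal{K},\ [\mathcal{A},\mathcal{A}],\ \mathcal{A}. \]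
   Context: An involution of the first kind on an $\mathbb{F}$-algebra $\mathcal{A}$ is an $\mathbb{F}$-linear map $*$ with $(a^* )^*=a$ and $(ab)^*=b^*a^*$. For subsets $U,V\subseteq\mathcal{A}$, $[U,V]$ denotes the linear span of all commutators $[u,v]=uv-vu$ with $u\in U$, $v\in V$. A $*$-polynomial is an element of the free algebra $\mathbb{F}\langle Y;Z\rangle$ on symmetric variables $y_i$ ($y_i^*=y_i$) and skew-symmetric variables $z_j$ ($z_j^*=-z_j$); its image $f(\mathcal{A})$ is the set of its values when symmetric elements of $\mathcal{A}$ are substituted for the $y_i$ and skew-symmetric elements for the $z_j$. It is multilinear if each variable occurs exactly once in every monomial. *)

theory Defs
  imports "HOL-Analysis.Analysis"
begin

type_synonym 'a m2 = "'a ^ 2 ^ 2"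

definition msmult :: "'a::field \<Rightarrow> 'a m2 \<Rightarrow> 'a m2" where
  "msmult c A = (\<chi> i j. c * A $ i $ j)"

definition lspan :: "'a::field m2 set \<Rightarrow> 'a m2 set" where
  "lspan U = module.span msmult U"

definition mprod :: "'a::field m2 list \<Rightarrow> 'a m2" where
  "mprod xs = foldr (\<lambda>A B. A ** B) xs (mat 1)"

definition symplectic :: "'a::field m2 \<Rightarrow> 'a m2" where
  "symplectic A = (\<chi> i j. if i = j then A $ (if i = 1 then 2 else 1) $ (if i = 1 then 2 else 1)
                            else - A $ i $ j)"

definition sym_els :: "('a::field m2 \<Rightarrow> 'a m2) \<Rightarrow> 'a m2 set" where
  "sym_els star = {A. star A = A}"

definition skew_els :: "('a::field m2 \<Rightarrow> 'a m2) \<Rightarrow> 'a m2 set" where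
  "skew_els star = {A. star A = - A}"

definition central_els :: "'a::field m2 set" where
  "central_els = range (\<lambda>c. mat c)"

definition comm_span :: "'a::field m2 set \<Rightarrow> 'a m2 set \<Rightarrow> 'a m2 set" where
  "comm_span U V = lspan {u ** v - v ** u | u v. u \<in> U \<and> v \<in> V}"

definition set_plus_m :: "'a::field m2 set \<Rightarrow> 'a m2 set \<Rightarrow> 'a m2 set" where
  "set_plus_m U V = {u + v | u v. u \<in> U \<and> v \<in> V}"

text \<open>A multilinear *-polynomial in the variables indexed 0..n-1, where the indices in Y are
  symmetric variables y_i and the others skew-symmetric variables z_j, is
  f = sum over permutations s of {..<n} of  c s * x_(s 0) x_(s 1) ... x_(s (n-1)).\<close>
definition mpoly_eval :: "nat \<Rightarrow> ((nat \<Rightarrow> nat) \<Rightarrow> 'a::field) \<Rightarrow> (nat \<Rightarrow> 'a m2) \<Rightarrow> 'a m2" where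
  "mpoly_eval n c x = (\<Sum>s\<in>{s. s permutes {..<n}}. msmult (c s) (mprod (map (\<lambda>i. x (s i)) [0..<n])))"

definition star_admissible :: "('a::field m2 \<Rightarrow> 'a m2) \<Rightarrow> nat \<Rightarrow> nat set \<Rightarrow> (nat \<Rightarrow> 'a m2) \<Rightarrow> bool" where
  "star_admissible star n Y x \<longleftrightarrow>
     (\<forall>i<n. (i \<in> Y \<longrightarrow> x i \<in> sym_els star) \<and> (i \<notin> Y \<longrightarrow> x i \<in> skew_els star))"

definition star_image :: "('a::field m2 \<Rightarrow> 'a m2) \<Rightarrow> nat \<Rightarrow> nat set \<Rightarrow> ((nat \<Rightarrow> nat) \<Rightarrow> 'a) \<Rightarrow> 'a m2 set" where
  "star_image star n Y c = {mpoly_eval n c x | x. star_admissible star n Y x}"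

definition candidate_spaces :: "('a::field m2 \<Rightarrow> 'a m2) \<Rightarrow> 'a m2 set set" where
  "candidate_spaces star =
     {{0}, central_els, skew_els star, comm_span (sym_els star) (skew_els star), sym_els star,
      set_plus_m central_els (skew_els star), comm_span UNIV UNIV, UNIV}"

end

theory Submission
  imports Defs
begin


lemmas ent = vec_eq_iff forall_2 matrix_matrix_mult_def sum_2 mat_def transpose_def symplectic_def msmult_def

lemma mod_m2: "module (msmult :: 'a::field \<Rightarrow> 'a m2 \<Rightarrow> 'a m2)"
  by unfold_locales (simp_all add: ent algebra_simps)

lemma lspan_add: "X \<in> lspan B \<Longrightarrow> Y \<in> lspan B \<Longrightarrow> X + Y \<in> lspan B"
  unfolding lspan_def by (rule module.span_add[OF mod_m2])
lemma lspan_scale: "X \<in> lspan B \<Longrightarrow> msmult a X \<in> lspan B"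
  unfolding lspan_def by (rule module.span_scale[OF mod_m2])
lemma lspan_zero: "0 \<in> lspan B"
  unfolding lspan_def by (rule module.span_zero[OF mod_m2])
lemma lspan_base: "X \<in> B \<Longrightarrow> X \<in> lspan B"
  unfolding lspan_def by (rule module.span_base[OF mod_m2])

lemma subspace_m2I:
  assumes "0 \<in> U" "\<And>X Y. X \<in> U \<Longrightarrow> Y \<in> U \<Longrightarrow> X + Y \<in> U"
    "\<And>a X. X \<in> U \<Longrightarrow> msmult a X \<in> U"
  shows "module.subspace msmult (U :: 'a::field m2 set)"
  using assms unfolding module.subspace_def[OF mod_m2] by blast

lemma lspan_minimal:
  assumes "B \<subseteq> U" "0 \<in> U" "\<And>X Y. X \<in> U \<Longrightarrow> Y \<in> U \<Longrightarrow> X + Y \<in> U"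
    "\<And>a X. X \<in> U \<Longrightarrow> msmult a X \<in> U"
  shows "lspan (B :: 'a::field m2 set) \<subseteq> U"
  unfolding lspan_def
  by (rule module.span_minimal[OF mod_m2 assms(1) subspace_m2I[OF assms(2-4)]])

lemma lspan_invariant:
  fixes \<phi> :: "'a::field m2 \<Rightarrow> 'a m2"
  assumes add: "\<And>X Y. \<phi> (X + Y) = \<phi> X + \<phi> Y"
    and sc: "\<And>a X. \<phi> (msmult a X) = msmult a (\<phi> X)"
    and base: "\<And>X. X \<in> B \<Longrightarrow> \<phi> X \<in> lspan B"
    and X: "X \<in> lspan B"
  shows "\<phi> X \<in> lspan B"
proof -
  have z: "\<phi> 0 = 0" using add[of 0 0] by simp
  have "lspan B \<subseteq> {X. \<phi> X \<in> lspan B}"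
    by (rule lspan_minimal) (auto simp: z add sc base lspan_zero lspan_add lspan_scale)
  with X show ?thesis by blast
qed

definition mk :: "'a \<Rightarrow> 'a \<Rightarrow> 'a \<Rightarrow> 'a \<Rightarrow> 'a^2^2" where
  "mk a b c d = (\<chi> i j. if i = 1 then (if j = 1 then a else b) else (if j = 1 then c else d))"

lemma mk_nth[simp]: "mk a b c d $ 1 $ 1 = a" "mk a b c d $ 1 $ 2 = b"
   "mk a b c d $ 2 $ 1 = c" "mk a b c d $ 2 $ 2 = d"
  by (simp_all add: mk_def)

lemma mprod_Nil[simp]: "mprod [] = mat 1" by (simp add: mprod_def)
lemma mprod_Cons[simp]: "mprod (A # xs) = A ** mprod xs" by (simp add: mprod_def)

lemma mprod_conj:
  assumes PQ: "P ** Q = mat 1" and QP: "Q ** P = mat 1"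
  shows "mprod (map (\<lambda>i. P ** f i ** Q) xs) = P ** mprod (map f xs) ** Q"
proof (induct xs)
  case Nil then show ?case using PQ by simp
next
  case (Cons a xs)
  have "(P ** f a ** Q) ** (P ** mprod (map f xs) ** Q) = P ** f a ** (Q ** P) ** mprod (map f xs) ** Q"
    by (simp add: matrix_mul_assoc)
  also have "\<dots> = P ** (f a ** mprod (map f xs)) ** Q" by (simp add: QP matrix_mul_assoc)
  finally show ?case using Cons by simp
qed

lemma matrix_add_rdistrib2: "((A::'a::field m2) + B) ** C = A ** C + B ** C"
  by (simp add: matrix_matrix_mult_def vec_eq_iff sum.distrib[symmetric] algebra_simps)
lemma conj_add: fixes P X Y Q :: "'a::field m2" shows "P ** (X + Y) ** Q = P ** X ** Q + P ** Y ** Q"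
  by (simp add: matrix_add_ldistrib matrix_add_rdistrib2)
lemma conj_smult: "(P::'a::field m2) ** msmult a X ** Q = msmult a (P ** X ** Q)"
  by (simp add: ent algebra_simps sum_distrib_left)
lemma conj_neg: fixes P X Q :: "'a::field m2" shows "P ** (- X) ** Q = - (P ** X ** Q)"
  using conj_add[of P X "-X" Q] by (simp add: neg_eq_iff_add_eq_0[symmetric])
lemma smult_add: "msmult a ((X::'a::field m2) + Y) = msmult a X + msmult a Y"
  by (simp add: ent algebra_simps)

lemma mpoly_conj:
  assumes PQ: "P ** Q = mat 1" and QP: "Q ** P = mat 1"
  shows "mpoly_eval n c (\<lambda>i. P ** x i ** Q) = P ** mpoly_eval n c x ** Q"
proof -
  have "P ** mpoly_eval n c x ** Q = (\<Sum>s\<in>{s. s permutes {..<n}}. P ** msmult (c s) (mprod (map (\<lambda>i. x (s i)) [0..<n])) ** Q)"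
    unfolding mpoly_eval_def
    by (rule sum_comp_morphism[where h = "\<lambda>X. P ** X ** Q", unfolded o_def, symmetric])
       (simp_all add: conj_add)
  also have "\<dots> = mpoly_eval n c (\<lambda>i. P ** x i ** Q)"
    unfolding mpoly_eval_def conj_smult
    by (intro sum.cong refl) (simp add: mprod_conj[OF PQ QP])
  finally show ?thesis by simp
qed



lemma mprod_upd_notin:
  "j \<notin> s ` set xs \<Longrightarrow> mprod (map (\<lambda>i. (x(j:=w)) (s i)) xs) = mprod (map (\<lambda>i. x (s i)) xs)"
  by (rule arg_cong[where f=mprod]) auto

lemma mprod_upd_add:
  fixes x :: "nat \<Rightarrow> 'a::field m2"
  shows "distinct (map s xs) \<Longrightarrow> j \<in> s ` set xs \<Longrightarrow>
    mprod (map (\<lambda>i. (x(j:=u+v)) (s i)) xs) =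
    mprod (map (\<lambda>i. (x(j:=u)) (s i)) xs) + mprod (map (\<lambda>i. (x(j:=v)) (s i)) xs)"
proof (induct xs)
  case Nil then show ?case by simp
next
  case (Cons a xs)
  show ?case
  proof (cases "s a = j")
    case True
    with Cons.prems have "j \<notin> s ` set xs" by auto
    then show ?thesis using True
      by (simp del: fun_upd_apply add: fun_upd_same mprod_upd_notin[of j s xs] matrix_add_rdistrib2)
  next
    case False
    with Cons.prems have "j \<in> s ` set xs" "distinct (map s xs)" by auto
    then show ?thesis using False Cons.hyps
      by (simp del: fun_upd_apply add: fun_upd_other[OF False] matrix_add_ldistrib)
  qed
qed

lemma mpoly_add:
  fixes x :: "nat \<Rightarrow> 'a::field m2"
  assumes j: "j < n"
  shows "mpoly_eval n c (x(j:=u+v)) = mpoly_eval n c (x(j:=u)) + mpoly_eval n c (x(j:=v))"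
  unfolding mpoly_eval_def sum.distrib[symmetric]
proof (intro sum.cong refl)
  fix s assume "s \<in> {s. s permutes {..<n}}"
  then have s: "s permutes {..<n}" by simp
  have d: "distinct (map s [0..<n])"
    using permutes_inj_on[OF s] by (simp add: distinct_map atLeast0LessThan)
  have "j \<in> s ` set [0..<n]"
    using permutes_image[OF s] j by (simp add: atLeast0LessThan)
  then show "msmult (c s) (mprod (map (\<lambda>i. (x(j := u + v)) (s i)) [0..<n])) =
         msmult (c s) (mprod (map (\<lambda>i. (x(j := u)) (s i)) [0..<n])) +
         msmult (c s) (mprod (map (\<lambda>i. (x(j := v)) (s i)) [0..<n]))"
    by (simp del: fun_upd_apply add: mprod_upd_add[OF d] smult_add)
qed

definition Mg :: "int \<Rightarrow> 'a::field m2 set" where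
  "Mg k = (if k = 0 then {X. X$1$2 = 0 \<and> X$2$1 = 0}
     else if k = 1 then {X. X$1$1 = 0 \<and> X$2$1 = 0 \<and> X$2$2 = 0}
     else if k = -1 then {X. X$1$1 = 0 \<and> X$1$2 = 0 \<and> X$2$2 = 0} else {0})"

lemma Mg_mult: "A \<in> Mg a \<Longrightarrow> B \<in> Mg b \<Longrightarrow> A ** B \<in> Mg (a+b)"
  by (auto simp: Mg_def ent split: if_splits)

lemma Mg_add: "A \<in> Mg a \<Longrightarrow> B \<in> Mg a \<Longrightarrow> A + B \<in> Mg a"
  by (auto simp: Mg_def ent split: if_splits)
lemma Mg_smult: "A \<in> Mg a \<Longrightarrow> msmult c A \<in> Mg a"
  by (auto simp: Mg_def ent split: if_splits)
lemma Mg_zero: "0 \<in> Mg a"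
  by (auto simp: Mg_def ent split: if_splits)
lemma Mg_one: "mat 1 \<in> Mg 0"
  by (auto simp: Mg_def ent split: if_splits)

lemma mprod_Mg: "(\<forall>i\<in>set xs. f i \<in> Mg (d i)) \<Longrightarrow> mprod (map f xs) \<in> Mg (sum_list (map d xs))"
  by (induct xs) (auto simp: Mg_one intro: Mg_mult)

lemma sum_Mg: "finite S \<Longrightarrow> (\<forall>s\<in>S. F s \<in> Mg k) \<Longrightarrow> sum F S \<in> Mg k"
  by (induct S rule: finite_induct) (auto simp: Mg_zero Mg_add)

lemma mpoly_Mg:
  fixes x :: "nat \<Rightarrow> 'a::field m2"
  assumes "\<forall>i<n. x i \<in> Mg (d i)"
  shows "mpoly_eval n c x \<in> Mg (\<Sum>i<n. d i)"
  unfolding mpoly_eval_def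
proof (rule sum_Mg)
  show "finite {s. s permutes {..<n}}" by (rule finite_permutations) simp
  show "\<forall>s\<in>{s. s permutes {..<n}}. msmult (c s) (mprod (map (\<lambda>i. x (s i)) [0..<n])) \<in> Mg (\<Sum>i<n. d i)"
  proof
    fix s assume "s \<in> {s. s permutes {..<n}}"
    then have s: "s permutes {..<n}" by simp
    have "\<forall>i\<in>set [0..<n]. x (s i) \<in> Mg (d (s i))"
      using assms permutes_in_image[OF s] by auto
    then have "mprod (map (\<lambda>i. x (s i)) [0..<n]) \<in> Mg (sum_list (map (\<lambda>i. d (s i)) [0..<n]))"
      by (rule mprod_Mg)
    moreover have "sum_list (map (\<lambda>i. d (s i)) [0..<n]) = (\<Sum>i<n. d i)"
      using sum.permute[OF s, of d]
      by (simp add: sum_set_upt_conv_sum_list_nat[symmetric] atLeast0LessThan o_def)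
    ultimately show "msmult (c s) (mprod (map (\<lambda>i. x (s i)) [0..<n])) \<in> Mg (\<Sum>i<n. d i)"
      by (simp add: Mg_smult)
  qed
qed

definition pr :: "int \<Rightarrow> 'a::field m2 \<Rightarrow> 'a m2" where
  "pr k X = (if k = 0 then mk (X$1$1) 0 0 (X$2$2) else if k = 1 then mk 0 (X$1$2) 0 0
     else if k = -1 then mk 0 0 (X$2$1) 0 else 0)"

lemmas entm = ent mk_def

lemma pr_add: "pr k (X + Y) = pr k X + pr k Y"
  by (simp add: pr_def entm)
lemma pr_smult: "pr k (msmult a X) = msmult a (pr k X)"
  by (simp add: pr_def entm)
lemma pr_neg: "pr k (- X) = - pr k X"
  by (simp add: pr_def entm)
lemma pr_Mg: "X \<in> Mg d \<Longrightarrow> pr k X = (if k = d then X else 0)"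
  by (auto simp: pr_def Mg_def entm split: if_splits)
lemma pr_in_Mg: "pr k X \<in> Mg k"
  by (auto simp: pr_def Mg_def entm split: if_splits)
lemma pr_decomp: "X = pr (-1) X + pr 0 X + pr 1 X"
  by (simp add: pr_def entm)
lemma pr_sympl: "symplectic (pr k X) = pr k (symplectic X)"
  by (simp add: pr_def entm)

lemma adm_upd:
  assumes "star_admissible star n Y x" "x j \<in> sym_els star \<Longrightarrow> w \<in> sym_els star"
    "x j \<in> skew_els star \<Longrightarrow> w \<in> skew_els star"
  shows "star_admissible star n Y (x(j:=w))"
  using assms unfolding star_admissible_def by auto

lemma graded_image:
  fixes c :: "(nat \<Rightarrow> nat) \<Rightarrow> 'a::field"
  assumes adm: "star_admissible symplectic n Y x"
  shows "pr k (mpoly_eval n c x) \<in> lspan (star_image symplectic n Y c)"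
proof -
  let ?W = "lspan (star_image symplectic n Y c)"
  have "\<forall>x::nat \<Rightarrow> 'a m2. star_admissible symplectic n Y x \<longrightarrow> (\<forall>i. m \<le> i \<and> i < n \<longrightarrow> (\<exists>d. x i \<in> Mg d))
         \<longrightarrow> pr k (mpoly_eval n c x) \<in> ?W" for m
  proof (induct m)
    case 0
    show ?case
    proof (intro allI impI)
      fix x :: "nat \<Rightarrow> 'a m2" assume a: "star_admissible symplectic n Y x" and h: "\<forall>i. 0 \<le> i \<and> i < n \<longrightarrow> (\<exists>d. x i \<in> Mg d)"
      then have "\<forall>i. \<exists>d. i < n \<longrightarrow> x i \<in> Mg d" by auto
      then obtain d where "\<forall>i. i < n \<longrightarrow> x i \<in> Mg (d i)" by metis
      then have "mpoly_eval n c x \<in> Mg (\<Sum>i<n. d i)" by (intro mpoly_Mg) auto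
      then have p: "pr k (mpoly_eval n c x) = (if k = (\<Sum>i<n. d i) then mpoly_eval n c x else 0)"
        by (rule pr_Mg)
      have "mpoly_eval n c x \<in> ?W"
        using a by (intro lspan_base) (auto simp: star_image_def)
      then show "pr k (mpoly_eval n c x) \<in> ?W" by (simp add: p lspan_zero)
    qed
  next
    case (Suc m)
    show ?case
    proof (intro allI impI)
      fix x :: "nat \<Rightarrow> 'a m2" assume a: "star_admissible symplectic n Y x" and h: "\<forall>i. Suc m \<le> i \<and> i < n \<longrightarrow> (\<exists>d. x i \<in> Mg d)"
      show "pr k (mpoly_eval n c x) \<in> ?W"
      proof (cases "m < n")
        case False
        then have "\<forall>i. m \<le> i \<and> i < n \<longrightarrow> (\<exists>d. x i \<in> Mg d)" using h by auto
        then show ?thesis using Suc a by blast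
      next
        case True
        define y where "y k' = x(m := pr k' (x m))" for k'
        have yadm: "star_admissible symplectic n Y (y k')" for k'
          unfolding y_def
          by (rule adm_upd[OF a]) (auto simp: sym_els_def skew_els_def pr_sympl pr_neg)
        have yh: "\<forall>i. m \<le> i \<and> i < n \<longrightarrow> (\<exists>d. y k' i \<in> Mg d)" for k'
        proof (intro allI impI)
          fix i assume "m \<le> i \<and> i < n"
          then show "\<exists>d. y k' i \<in> Mg d"
            using h pr_in_Mg[of k' "x m"] unfolding y_def
            by (cases "i = m") auto
        qed
        have yin: "pr k (mpoly_eval n c (y k')) \<in> ?W" for k'
          using Suc yadm yh by blast
        have "x = x(m := pr (-1) (x m) + (pr 0 (x m) + pr 1 (x m)))"
          using pr_decomp[of "x m"] by (simp add: add.assoc[symmetric])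
        then have "mpoly_eval n c x = mpoly_eval n c (y (-1)) + (mpoly_eval n c (y 0) + mpoly_eval n c (y 1))"
          unfolding y_def by (metis True mpoly_add fun_upd_upd)
        then show ?thesis using yin
          by (simp add: pr_add lspan_add)
      qed
    qed
  qed
  from this[of n] show ?thesis using adm by auto
qed

lemma graded:
  fixes c :: "(nat \<Rightarrow> nat) \<Rightarrow> 'a::field"
  assumes "X \<in> lspan (star_image symplectic n Y c)"
  shows "pr k X \<in> lspan (star_image symplectic n Y c)"
proof (rule lspan_invariant[OF pr_add pr_smult _ assms])
  fix Z assume "Z \<in> star_image symplectic n Y c"
  then obtain x where Z: "Z = mpoly_eval n c x" and a: "star_admissible symplectic n Y x"
    by (auto simp: star_image_def)
  show "pr k Z \<in> lspan (star_image symplectic n Y c)"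
    unfolding Z by (rule graded_image[OF a])
qed

lemma conj_inv:
  fixes P Q :: "'a::field m2"
  assumes PQ: "P ** Q = mat 1" and QP: "Q ** P = mat 1"
    and st: "\<And>X. star (P ** X ** Q) = P ** star X ** Q"
    and X: "X \<in> lspan (star_image star n Y c)"
  shows "P ** X ** Q \<in> lspan (star_image star n Y c)"
proof (rule lspan_invariant[where \<phi> = "\<lambda>X. P ** X ** Q", OF conj_add conj_smult _ X])
  fix Z assume "Z \<in> star_image star n Y c"
  then obtain x where Z: "Z = mpoly_eval n c x" and a: "star_admissible star n Y x"
    by (auto simp: star_image_def)
  have "star_admissible star n Y (\<lambda>i. P ** x i ** Q)"
    using a by (auto simp: star_admissible_def sym_els_def skew_els_def st conj_neg)
  then have "mpoly_eval n c (\<lambda>i. P ** x i ** Q) \<in> star_image star n Y c"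
    by (auto simp: star_image_def)
  then show "P ** Z ** Q \<in> lspan (star_image star n Y c)"
    by (simp add: Z mpoly_conj[OF PQ QP, symmetric] lspan_base)
qed





lemma central_char: "central_els = {X::'a::field m2. X$1$2 = 0 \<and> X$2$1 = 0 \<and> X$1$1 = X$2$2}"
proof (intro set_eqI iffI)
  fix X :: "'a m2"
  assume "X \<in> central_els" then show "X \<in> {X. X$1$2 = 0 \<and> X$2$1 = 0 \<and> X$1$1 = X$2$2}"
    by (auto simp: central_els_def mat_def)
next
  fix X :: "'a m2"
  assume "X \<in> {X. X$1$2 = 0 \<and> X$2$1 = 0 \<and> X$1$1 = X$2$2}"
  then have "X = mat (X$1$1)" by (auto simp: ent)
  then show "X \<in> central_els" unfolding central_els_def by blast
qed

lemma skew_tr: "skew_els transpose = {X::real m2. X$1$1 = 0 \<and> X$2$2 = 0 \<and> X$1$2 + X$2$1 = 0}"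
  by (auto simp: skew_els_def ent)

lemma sym_tr: "sym_els transpose = {X::real m2. X$1$2 = X$2$1}"
  by (auto simp: sym_els_def ent)

lemma plus_ZK: "set_plus_m central_els (skew_els transpose) = {X::real m2. X$1$1 = X$2$2 \<and> X$1$2 + X$2$1 = 0}"
proof (intro set_eqI iffI)
  fix X :: "real m2"
  assume "X \<in> set_plus_m central_els (skew_els transpose)"
  then show "X \<in> {X. X$1$1 = X$2$2 \<and> X$1$2 + X$2$1 = 0}"
    by (auto simp: set_plus_m_def central_char skew_tr)
next
  fix X :: "real m2"
  assume X: "X \<in> {X. X$1$1 = X$2$2 \<and> X$1$2 + X$2$1 = 0}"
  have "X = mat (X$1$1) + mk 0 (X$1$2) (X$2$1) 0" using X by (auto simp: entm)
  moreover have "mat (X$1$1) \<in> central_els" by (simp add: central_els_def)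
  moreover have "mk 0 (X$1$2) (X$2$1) 0 \<in> skew_els transpose" using X by (simp add: skew_tr)
  ultimately show "X \<in> set_plus_m central_els (skew_els transpose)"
    unfolding set_plus_m_def by blast
qed

lemma lspan_minimal2: "B \<subseteq> U \<Longrightarrow> module.subspace msmult U \<Longrightarrow> lspan (B::'a::field m2 set) \<subseteq> U"
  unfolding lspan_def by (rule module.span_minimal[OF mod_m2])

lemma tr_sub: "module.subspace msmult {X::'a::field m2. X$1$1 + X$2$2 = 0}"
proof (rule subspace_m2I)
  show "0 \<in> {X::'a m2. X$1$1 + X$2$2 = 0}" by simp
next
  fix X Y :: "'a m2" assume "X \<in> {X. X$1$1 + X$2$2 = 0}" "Y \<in> {X. X$1$1 + X$2$2 = 0}"
  moreover have "(X+Y)$1$1 + (X+Y)$2$2 = (X$1$1 + X$2$2) + (Y$1$1+Y$2$2)" by (simp add: algebra_simps)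
  ultimately show "X + Y \<in> {X. X$1$1 + X$2$2 = 0}" by simp
next
  fix a and X :: "'a m2" assume "X \<in> {X. X$1$1 + X$2$2 = 0}"
  moreover have "(msmult a X)$1$1 + (msmult a X)$2$2 = a * (X$1$1 + X$2$2)" by (simp add: msmult_def algebra_simps)
  ultimately show "msmult a X \<in> {X. X$1$1 + X$2$2 = 0}" by simp
qed

lemma sk_sub: "module.subspace msmult {X::real m2. X$1$1 + X$2$2 = 0 \<and> X$1$2 = X$2$1}"
proof (rule subspace_m2I)
  show "0 \<in> {X::real m2. X$1$1 + X$2$2 = 0 \<and> X$1$2 = X$2$1}" by simp
next
  fix X Y :: "real m2" assume "X \<in> {X. X$1$1 + X$2$2 = 0 \<and> X$1$2 = X$2$1}" "Y \<in> {X. X$1$1 + X$2$2 = 0 \<and> X$1$2 = X$2$1}"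
  then show "X + Y \<in> {X. X$1$1 + X$2$2 = 0 \<and> X$1$2 = X$2$1}" by simp
next
  fix a and X :: "real m2" assume "X \<in> {X. X$1$1 + X$2$2 = 0 \<and> X$1$2 = X$2$1}"
  moreover have "(msmult a X)$1$1 + (msmult a X)$2$2 = a * (X$1$1 + X$2$2)" by (simp add: msmult_def algebra_simps)
  ultimately show "msmult a X \<in> {X. X$1$1 + X$2$2 = 0 \<and> X$1$2 = X$2$1}" by (simp add: msmult_def)
qed

lemma comm_SK: "comm_span (sym_els transpose) (skew_els transpose) = {X::real m2. X$1$1 + X$2$2 = 0 \<and> X$1$2 = X$2$1}"
proof
  show "comm_span (sym_els transpose) (skew_els transpose) \<subseteq> {X::real m2. X$1$1 + X$2$2 = 0 \<and> X$1$2 = X$2$1}"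
    unfolding comm_span_def
  proof (rule lspan_minimal2[OF _ sk_sub])
    show "{u ** v - v ** u |u v. u \<in> sym_els transpose \<and> v \<in> skew_els transpose} \<subseteq> {X::real m2. X$1$1 + X$2$2 = 0 \<and> X$1$2 = X$2$1}"
    proof clarify
      fix u v :: "real m2"
      assume "u \<in> sym_els transpose" "v \<in> skew_els transpose"
      then have h: "u$1$2 = u$2$1" "v$1$1 = 0" "v$2$2 = 0" "v$2$1 = - v$1$2"
        by (auto simp: sym_tr skew_tr eq_neg_iff_add_eq_0)
      show "(u ** v - v ** u)$1$1 + (u ** v - v ** u)$2$2 = 0 \<and> (u ** v - v ** u)$1$2 = (u ** v - v ** u)$2$1"
        by (simp add: ent h algebra_simps)
    qed
  qed
next
  show "{X::real m2. X$1$1 + X$2$2 = 0 \<and> X$1$2 = X$2$1} \<subseteq> comm_span (sym_els transpose) (skew_els transpose)"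
  proof clarify
    fix X :: "real m2" assume X: "X$1$1 + X$2$2 = 0" "X$1$2 = X$2$1"
    let ?G = "{u ** v - v ** u |u v. u \<in> sym_els transpose \<and> v \<in> skew_els transpose}"
    let ?K = "mk 0 1 (-1) 0 :: real m2"
    have K: "?K \<in> skew_els transpose" by (simp add: skew_tr)
    have C1: "mk 1 0 0 0 ** ?K - ?K ** mk 1 0 0 0 \<in> lspan ?G"
      by (rule lspan_base, rule CollectI, rule exI[of _ "mk 1 0 0 0"], rule exI[of _ ?K]) (simp add: sym_tr K)
    have C2: "mk 0 1 1 0 ** ?K - ?K ** mk 0 1 1 0 \<in> lspan ?G"
      by (rule lspan_base, rule CollectI, rule exI[of _ "mk 0 1 1 0"], rule exI[of _ ?K]) (simp add: sym_tr K)
    have "X = msmult (X$1$2) (mk 1 0 0 0 ** ?K - ?K ** mk 1 0 0 0) + msmult (- X$1$1 / 2) (mk 0 1 1 0 ** ?K - ?K ** mk 0 1 1 0)"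
      using X by (simp add: entm eq_neg_iff_add_eq_0[symmetric])
    moreover have "msmult (X$1$2) (mk 1 0 0 0 ** ?K - ?K ** mk 1 0 0 0) + msmult (- X$1$1 / 2) (mk 0 1 1 0 ** ?K - ?K ** mk 0 1 1 0) \<in> lspan ?G"
      by (intro lspan_add lspan_scale C1 C2)
    ultimately show "X \<in> comm_span (sym_els transpose) (skew_els transpose)"
      unfolding comm_span_def by simp
  qed
qed

lemma comm_AA: "comm_span UNIV UNIV = {X::'a::field m2. X$1$1 + X$2$2 = 0}"
proof
  show "comm_span UNIV UNIV \<subseteq> {X::'a m2. X$1$1 + X$2$2 = 0}"
    unfolding comm_span_def
  proof (rule lspan_minimal2[OF _ tr_sub])
    show "{u ** v - v ** u |(u::'a m2) v. u \<in> UNIV \<and> v \<in> UNIV} \<subseteq> {X. X$1$1 + X$2$2 = 0}"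
    proof clarify
      fix u v :: "'a m2"
      show "(u ** v - v ** u)$1$1 + (u ** v - v ** u)$2$2 = 0"
        by (simp add: ent algebra_simps)
    qed
  qed
next
  show "{X::'a m2. X$1$1 + X$2$2 = 0} \<subseteq> comm_span UNIV UNIV"
  proof clarify
    fix X :: "'a m2" assume X: "X$1$1 + X$2$2 = 0"
    let ?G = "{u ** v - v ** u |(u::'a m2) v. u \<in> UNIV \<and> v \<in> UNIV}"
    have b: "u ** v - v ** u \<in> lspan ?G" for u v by (rule lspan_base) auto
    let ?A = "mk 1 0 0 0 :: 'a m2" and ?B = "mk 0 1 0 0 :: 'a m2" and ?C = "mk 0 0 1 0 :: 'a m2"
    have "X = msmult (X$1$1) (?B ** ?C - ?C ** ?B) + msmult (X$1$2) (?A ** ?B - ?B ** ?A) + msmult (X$2$1) (?C ** ?A - ?A ** ?C)"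
      using X by (simp add: entm eq_neg_iff_add_eq_0[symmetric])
    moreover have "msmult (X$1$1) (?B ** ?C - ?C ** ?B) + msmult (X$1$2) (?A ** ?B - ?B ** ?A) + msmult (X$2$1) (?C ** ?A - ?A ** ?C) \<in> lspan ?G"
      by (intro lspan_add lspan_scale b)
    ultimately show "X \<in> comm_span UNIV UNIV"
      unfolding comm_span_def by simp
  qed
qed



lemma tr_class:
  fixes W :: "real m2 set"
  assumes add: "\<And>X Y. X\<in>W \<Longrightarrow> Y\<in>W \<Longrightarrow> X+Y \<in> W"
    and sc: "\<And>a X. X\<in>W \<Longrightarrow> msmult a X \<in> W" and z: "0 \<in> W"
    and cJ: "\<And>X. X\<in>W \<Longrightarrow> mk 0 (-1) 1 0 ** X ** mk 0 1 (-1) 0 \<in> W"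
    and cR: "\<And>X. X\<in>W \<Longrightarrow> mk 1 0 0 (-1) ** X ** mk 1 0 0 (-1) \<in> W"
    and cG: "\<And>X. X\<in>W \<Longrightarrow> mk 1 (-1) 1 1 ** X ** mk (1/2) (1/2) (-1/2) (1/2) \<in> W"
  shows "W \<in> candidate_spaces transpose"
proof -
  have diff: "X - Y \<in> W" if "X \<in> W" "Y \<in> W" for X Y
  proof -
    have e: "X - Y = X + msmult (-1) Y" by (simp add: ent)
    show ?thesis unfolding e by (rule add[OF that(1) sc[OF that(2)]])
  qed
  have trm: "msmult a M \<in> W" if "a = 0 \<or> M \<in> W" for a M
  proof (cases "a = 0")
    case True
    have "msmult a M = 0" using True by (simp add: ent)
    then show ?thesis using z by simp
  next
    case False then show ?thesis using that sc by blast
  qed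
  have parts: "mk ((X$1$1+X$2$2)/2) 0 0 ((X$1$1+X$2$2)/2) \<in> W \<and>
      mk 0 ((X$1$2-X$2$1)/2) ((X$2$1-X$1$2)/2) 0 \<in> W \<and>
      mk ((X$1$1-X$2$2)/2) ((X$1$2+X$2$1)/2) ((X$1$2+X$2$1)/2) ((X$2$2-X$1$1)/2) \<in> W"
    if X: "X \<in> W" for X
  proof -
    let ?Y = "msmult (1/2) (X + mk 0 (-1) 1 0 ** X ** mk 0 1 (-1) 0)"
    have Y: "?Y \<in> W" using sc add cJ X by blast
    have Yeq: "?Y = mk ((X$1$1+X$2$2)/2) ((X$1$2-X$2$1)/2) ((X$2$1-X$1$2)/2) ((X$1$1+X$2$2)/2)"
      by (simp add: entm field_simps)
    have e1: "msmult (1/2) (?Y + mk 1 0 0 (-1) ** ?Y ** mk 1 0 0 (-1)) = mk ((X$1$1+X$2$2)/2) 0 0 ((X$1$1+X$2$2)/2)"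
      unfolding Yeq by (simp add: entm field_simps)
    have e2: "msmult (1/2) (?Y - mk 1 0 0 (-1) ** ?Y ** mk 1 0 0 (-1)) = mk 0 ((X$1$2-X$2$1)/2) ((X$2$1-X$1$2)/2) 0"
      unfolding Yeq by (simp add: entm field_simps)
    have e3: "X - ?Y = mk ((X$1$1-X$2$2)/2) ((X$1$2+X$2$1)/2) ((X$1$2+X$2$1)/2) ((X$2$2-X$1$1)/2)"
      unfolding Yeq by (simp add: entm field_simps)
    show ?thesis
      using sc[OF add[OF Y cR[OF Y]], of "1/2"] sc[OF diff[OF Y cR[OF Y]], of "1/2"] diff[OF X Y]
      unfolding e1 e2 e3 by blast
  qed
  define zW where "zW = (\<exists>X\<in>W. X$1$1 + X$2$2 \<noteq> 0)"
  define kW where "kW = (\<exists>X\<in>W. X$1$2 - X$2$1 \<noteq> 0)"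
  define pW where "pW = (\<exists>X\<in>W. X$1$1 - X$2$2 \<noteq> 0 \<or> X$1$2 + X$2$1 \<noteq> 0)"
  have I: "mk 1 0 0 1 \<in> W" if zW
  proof -
    obtain X where X: "X \<in> W" "X$1$1 + X$2$2 \<noteq> 0" using \<open>zW\<close> zW_def by blast
    have eq: "msmult (2 / (X$1$1+X$2$2)) (mk ((X$1$1+X$2$2)/2) 0 0 ((X$1$1+X$2$2)/2)) = mk 1 0 0 1"
      using X(2) by (simp add: entm field_simps)
    show ?thesis by (subst eq[symmetric], rule sc) (use parts[OF X(1)] in blast)
  qed
  have K: "mk 0 1 (-1) 0 \<in> W" if kW
  proof -
    obtain X where X: "X \<in> W" "X$1$2 - X$2$1 \<noteq> 0" using \<open>kW\<close> kW_def by blast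
    have eq: "msmult (2 / (X$1$2-X$2$1)) (mk 0 ((X$1$2-X$2$1)/2) ((X$2$1-X$1$2)/2) 0) = mk 0 1 (-1) 0"
      using X(2) by (simp add: entm field_simps)
    show ?thesis by (subst eq[symmetric], rule sc) (use parts[OF X(1)] in blast)
  qed
  have EF: "mk 1 0 0 (-1) \<in> W \<and> mk 0 1 1 0 \<in> W" if pW
  proof -
    obtain X where X: "X \<in> W" "X$1$1 - X$2$2 \<noteq> 0 \<or> X$1$2 + X$2$1 \<noteq> 0" using \<open>pW\<close> pW_def by blast
    define p where "p = X$1$1 - X$2$2"
    define q where "q = X$1$2 + X$2$1"
    have pq: "p*p + q*q \<noteq> 0" using X(2) unfolding p_def[symmetric] q_def[symmetric]
      by (simp add: sum_squares_eq_zero_iff)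
    have eq: "msmult 2 (mk ((X$1$1-X$2$2)/2) ((X$1$2+X$2$1)/2) ((X$1$2+X$2$1)/2) ((X$2$2-X$1$1)/2)) = mk p q q (-p)"
      unfolding p_def q_def by (simp add: entm field_simps)
    have Q: "mk p q q (-p) \<in> W" by (subst eq[symmetric], rule sc) (use parts[OF X(1)] in blast)
    have eq2: "mk 1 (-1) 1 1 ** mk p q q (-p) ** mk (1/2) (1/2) (-1/2) (1/2) = mk (-q) p p q"
      by (simp add: entm field_simps)
    have Q': "mk (-q) p p q \<in> W" using cG[OF Q] unfolding eq2 .
    have e1: "msmult (1/(p*p+q*q)) (msmult p (mk p q q (-p)) - msmult q (mk (-q) p p q)) = mk 1 0 0 (-1)"
      using pq by (simp add: entm field_simps)
    have e2: "msmult (1/(p*p+q*q)) (msmult q (mk p q q (-p)) + msmult p (mk (-q) p p q)) = mk 0 1 1 0"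
      using pq by (simp add: entm field_simps)
    have "msmult (1/(p*p+q*q)) (msmult p (mk p q q (-p)) - msmult q (mk (-q) p p q)) \<in> W"
      by (intro sc diff Q Q')
    moreover have "msmult (1/(p*p+q*q)) (msmult q (mk p q q (-p)) + msmult p (mk (-q) p p q)) \<in> W"
      by (intro sc add Q Q')
    ultimately show ?thesis unfolding e1 e2 by blast
  qed
  have Wc: "W = {X. (zW \<or> X$1$1 + X$2$2 = 0) \<and> (kW \<or> X$1$2 - X$2$1 = 0) \<and>
                   (pW \<or> (X$1$1 - X$2$2 = 0 \<and> X$1$2 + X$2$1 = 0))}"
  proof
    show "W \<subseteq> {X. (zW \<or> X$1$1 + X$2$2 = 0) \<and> (kW \<or> X$1$2 - X$2$1 = 0) \<and>
                   (pW \<or> (X$1$1 - X$2$2 = 0 \<and> X$1$2 + X$2$1 = 0))}"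
      unfolding zW_def kW_def pW_def by blast
  next
    show "{X. (zW \<or> X$1$1 + X$2$2 = 0) \<and> (kW \<or> X$1$2 - X$2$1 = 0) \<and>
                   (pW \<or> (X$1$1 - X$2$2 = 0 \<and> X$1$2 + X$2$1 = 0))} \<subseteq> W"
    proof clarify
      fix X :: "real m2"
      assume h: "zW \<or> X$1$1 + X$2$2 = 0" "kW \<or> X$1$2 - X$2$1 = 0"
                   "pW \<or> (X$1$1 - X$2$2 = 0 \<and> X$1$2 + X$2$1 = 0)"
      have eq: "X = msmult ((X$1$1 + X$2$2)/2) (mk 1 0 0 1) + msmult ((X$1$2 - X$2$1)/2) (mk 0 1 (-1) 0)
          + (msmult ((X$1$1 - X$2$2)/2) (mk 1 0 0 (-1)) + msmult ((X$1$2 + X$2$1)/2) (mk 0 1 1 0))"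
        by (simp add: entm field_simps)
      have t1: "msmult ((X$1$1 + X$2$2)/2) (mk 1 0 0 1) \<in> W" using h(1) I trm by auto
      have t2: "msmult ((X$1$2 - X$2$1)/2) (mk 0 1 (-1) 0) \<in> W" using h(2) K trm by auto
      have t3: "msmult ((X$1$1 - X$2$2)/2) (mk 1 0 0 (-1)) \<in> W" using h(3) EF trm by auto
      have t4: "msmult ((X$1$2 + X$2$1)/2) (mk 0 1 1 0) \<in> W" using h(3) EF trm by auto
      show "X \<in> W" using add[OF add[OF t1 t2] add[OF t3 t4]] by (subst eq)
    qed
  qed
  have cs: "candidate_spaces transpose = {{0}, central_els, skew_els transpose,
      comm_span (sym_els transpose) (skew_els transpose), sym_els transpose,
      set_plus_m central_els (skew_els transpose), comm_span UNIV UNIV, UNIV::real m2 set}"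
    by (simp add: candidate_spaces_def)
  have X0: "(X::real m2) = 0 \<longleftrightarrow> X$1$1 = 0 \<and> X$1$2 = 0 \<and> X$2$1 = 0 \<and> X$2$2 = 0" for X
    by (simp add: ent)
  { assume "\<not>zW" "\<not>kW" "\<not>pW"
    then have "W = {0}" unfolding Wc X0 by (auto simp: X0)
    then have ?thesis unfolding cs by blast }
  moreover
  { assume "zW" "\<not>kW" "\<not>pW"
    then have "W = central_els" unfolding Wc central_char by auto
    then have ?thesis unfolding cs by blast }
  moreover
  { assume "\<not>zW" "kW" "\<not>pW"
    then have "W = skew_els transpose" unfolding Wc skew_tr by auto
    then have ?thesis unfolding cs by blast }
  moreover
  { assume "\<not>zW" "\<not>kW" "pW"
    then have "W = comm_span (sym_els transpose) (skew_els transpose)" unfolding Wc comm_SK by auto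
    then have ?thesis unfolding cs by blast }
  moreover
  { assume "zW" "\<not>kW" "pW"
    then have "W = sym_els transpose" unfolding Wc sym_tr by auto
    then have ?thesis unfolding cs by blast }
  moreover
  { assume "zW" "kW" "\<not>pW"
    then have "W = set_plus_m central_els (skew_els transpose)" unfolding Wc plus_ZK by auto
    then have ?thesis unfolding cs by blast }
  moreover
  { assume "\<not>zW" "kW" "pW"
    then have "W = comm_span UNIV UNIV" unfolding Wc comm_AA by auto
    then have ?thesis unfolding cs by blast }
  moreover
  { assume "zW" "kW" "pW"
    then have "W = UNIV" unfolding Wc by auto
    then have ?thesis unfolding cs by blast }
  ultimately show ?thesis by blast
qed



lemma sym_class:
  fixes W :: "'a::field m2 set"
  assumes add: "\<And>X Y. X\<in>W \<Longrightarrow> Y\<in>W \<Longrightarrow> X+Y \<in> W"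
    and sc: "\<And>a X. X\<in>W \<Longrightarrow> msmult a X \<in> W" and z: "0 \<in> W"
    and cT: "\<And>X. X\<in>W \<Longrightarrow> mk 1 1 0 1 ** X ** mk 1 (-1) 0 1 \<in> W"
    and cL: "\<And>X. X \<in> W \<Longrightarrow> mk 1 0 1 1 ** X ** mk 1 0 (-1) 1 \<in> W"
    and cS: "\<And>X. X \<in> W \<Longrightarrow> mk 0 1 1 0 ** X ** mk 0 1 1 0 \<in> W"
    and prW: "\<And>k X. X \<in> W \<Longrightarrow> pr k X \<in> W"
  shows "W = {0} \<or> W = central_els \<or> W = {X. X$1$1 + X$2$2 = 0} \<or> W = UNIV"
proof -
  have diff: "X - Y \<in> W" if "X \<in> W" "Y \<in> W" for X Y
  proof -
    have "X - Y = X + msmult (-1) Y" by (simp add: ent)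
    then show ?thesis using add[OF that(1) sc[OF that(2)]] by metis
  qed
  show ?thesis
  proof (cases "\<exists>X\<in>W. X$1$2 \<noteq> 0 \<or> X$2$1 \<noteq> 0 \<or> X$1$1 \<noteq> X$2$2")
    case True
    then obtain X where X: "X \<in> W" and ne: "X$1$2 \<noteq> 0 \<or> X$2$1 \<noteq> 0 \<or> X$1$1 \<noteq> X$2$2" by blast
    have E12: "mk 0 1 0 0 \<in> W"
    proof -
      { assume b: "X$1$2 \<noteq> 0"
        have "msmult (1 / X$1$2) (pr 1 X) = mk 0 1 0 0" using b by (simp add: pr_def entm)
        then have ?thesis using sc[OF prW[OF X]] by metis }
      moreover
      { assume c: "X$2$1 \<noteq> 0"
        have "msmult (1 / X$2$1) (pr (-1) X) = mk 0 0 1 0" using c by (simp add: pr_def entm)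
        then have "mk 0 0 1 0 \<in> W" using sc[OF prW[OF X]] by metis
        moreover have "mk 0 1 1 0 ** mk 0 0 1 0 ** mk 0 1 1 0 = (mk 0 1 0 0 :: 'a m2)"
          by (simp add: entm)
        ultimately have ?thesis using cS by metis }
      moreover
      { assume ad: "X$1$1 \<noteq> X$2$2"
        let ?D = "pr 0 X"
        have D: "?D \<in> W" using prW[OF X] .
        have "?D - mk 1 1 0 1 ** ?D ** mk 1 (-1) 0 1 = mk 0 (X$1$1 - X$2$2) 0 0"
          by (simp add: pr_def entm)
        then have "mk 0 (X$1$1 - X$2$2) 0 0 \<in> W" using diff[OF D cT[OF D]] by metis
        moreover have "msmult (1 / (X$1$1 - X$2$2)) (mk 0 (X$1$1 - X$2$2) 0 0) = mk 0 1 0 0"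
          using ad by (simp add: entm)
        ultimately have ?thesis using sc by metis }
      ultimately show ?thesis using ne by blast
    qed
    have E21: "mk 0 0 1 0 \<in> W"
    proof -
      have "mk 0 1 1 0 ** mk 0 1 0 0 ** mk 0 1 1 0 = (mk 0 0 1 0 :: 'a m2)"
        by (simp add: entm)
      then show ?thesis using cS[OF E12] by metis
    qed
    have H: "mk 1 0 0 (-1) \<in> W"
    proof -
      have "mk 0 1 0 0 - mk 0 0 1 0 - mk 1 0 1 1 ** mk 0 1 0 0 ** mk 1 0 (-1) 1 = (mk 1 0 0 (-1) :: 'a m2)"
        by (simp add: entm)
      then show ?thesis using diff[OF diff[OF E12 E21] cL[OF E12]] by metis
    qed
    have sl: "X \<in> W" if "X$1$1 + X$2$2 = 0" for X
    proof -
      have "X = msmult (X$1$1) (mk 1 0 0 (-1)) + msmult (X$1$2) (mk 0 1 0 0) + msmult (X$2$1) (mk 0 0 1 0)"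
        using that by (simp add: entm eq_neg_iff_add_eq_0[symmetric])
      then show ?thesis using add sc H E12 E21 by metis
    qed
    show ?thesis
    proof (cases "\<exists>X\<in>W. X$1$1 + X$2$2 \<noteq> 0")
      case True
      then obtain Y where Y: "Y \<in> W" and t: "Y$1$1 + Y$2$2 \<noteq> 0" by blast
      have "M \<in> W" for M
      proof -
        let ?t = "(M$1$1 + M$2$2) / (Y$1$1 + Y$2$2)"
        have "(M - msmult ?t Y)$1$1 + (M - msmult ?t Y)$2$2 = 0"
          using t by (simp add: entm field_simps)
        then have "M - msmult ?t Y \<in> W" by (rule sl)
        moreover have "M = (M - msmult ?t Y) + msmult ?t Y" by simp
        ultimately show ?thesis using add sc Y by metis
      qed
      then show ?thesis by blast
    next
      case False
      then have "W = {X. X$1$1 + X$2$2 = 0}" using sl by blast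
      then show ?thesis by blast
    qed
  next
    case False
    then have scal: "\<forall>X\<in>W. X$1$2 = 0 \<and> X$2$1 = 0 \<and> X$1$1 = X$2$2" by blast
    show ?thesis
    proof (cases "W = {0}")
      case True then show ?thesis by blast
    next
      case False
      then obtain X where X: "X \<in> W" "X \<noteq> 0" using z by blast
      then have a: "X$1$1 \<noteq> 0" using scal by (auto simp: ent)
      have "W = central_els"
      proof
        show "W \<subseteq> central_els" using scal by (auto simp: central_char)
        show "central_els \<subseteq> W"
        proof
          fix M :: "'a m2" assume "M \<in> central_els"
          then obtain t where M: "M = mat t" by (auto simp: central_els_def)
          have "msmult (t / X$1$1) X = mat t" using a scal X by (auto simp: ent)
          then show "M \<in> W" using sc[OF X(1)] M by metis
        qed
      qed
      then show ?thesis by blast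
    qed
  qed
qed

lemma skew_sympl: "skew_els symplectic = {X::'a::field m2. X$1$1 + X$2$2 = 0}"
  by (auto simp: skew_els_def ent eq_neg_iff_add_eq_0[symmetric] add.commute)

lemma sympl_main:
  fixes c :: "(nat \<Rightarrow> nat) \<Rightarrow> 'a::field"
  shows "lspan (star_image symplectic n Y c) \<in> candidate_spaces symplectic"
proof -
  let ?W = "lspan (star_image symplectic n Y c)"
  have ci: "P ** X ** Q \<in> ?W" if "P ** Q = mat 1" "Q ** P = mat 1"
      "\<And>X. symplectic (P ** X ** Q) = P ** symplectic X ** Q" "X \<in> ?W" for P Q X
    by (rule conj_inv[OF that])
  have "?W = {0} \<or> ?W = central_els \<or> ?W = {X. X$1$1 + X$2$2 = 0} \<or> ?W = UNIV"
  proof (rule sym_class)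
    show "X + Y \<in> ?W" if "X \<in> ?W" "Y \<in> ?W" for X Y using that by (rule lspan_add)
    show "msmult a X \<in> ?W" if "X \<in> ?W" for a X using that by (rule lspan_scale)
    show "0 \<in> ?W" by (rule lspan_zero)
    show "pr k X \<in> ?W" if "X \<in> ?W" for k X using that by (rule graded)
    show "mk 1 1 0 1 ** X ** mk 1 (-1) 0 1 \<in> ?W" if "X \<in> ?W" for X
      by (rule ci[OF _ _ _ that]) (simp_all add: entm algebra_simps)
    show "mk 1 0 1 1 ** X ** mk 1 0 (-1) 1 \<in> ?W" if "X \<in> ?W" for X
      by (rule ci[OF _ _ _ that]) (simp_all add: entm algebra_simps)
    show "mk 0 1 1 0 ** X ** mk 0 1 1 0 \<in> ?W" if "X \<in> ?W" for X
      by (rule ci[OF _ _ _ that]) (simp_all add: entm algebra_simps)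
  qed
  then show ?thesis unfolding candidate_spaces_def skew_sympl[symmetric] by auto
qed


theorem mainTheorem3:
  shows "(\<forall>(n::nat) (Y::nat set) (c::(nat \<Rightarrow> nat) \<Rightarrow> real).
            lspan (star_image transpose n Y c) \<in> candidate_spaces transpose)
       \<and> (\<forall>(n::nat) (Y::nat set) (c::(nat \<Rightarrow> nat) \<Rightarrow> 'a::field).
            lspan (star_image symplectic n Y c) \<in> candidate_spaces symplectic)"
proof
  show "\<forall>(n::nat) (Y::nat set) (c::(nat \<Rightarrow> nat) \<Rightarrow> real).
            lspan (star_image transpose n Y c) \<in> candidate_spaces transpose"
  proof (intro allI)
    fix n :: nat and Y :: "nat set" and c :: "(nat \<Rightarrow> nat) \<Rightarrow> real"
    let ?W = "lspan (star_image transpose n Y c)"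
    have ci: "P ** X ** Q \<in> ?W" if "P ** Q = mat 1" "Q ** P = mat 1"
        "\<And>X. transpose (P ** X ** Q) = P ** transpose X ** Q" "X \<in> ?W" for P Q X
      by (rule conj_inv[OF that])
    show "?W \<in> candidate_spaces transpose"
    proof (rule tr_class)
      show "X + Y \<in> ?W" if "X \<in> ?W" "Y \<in> ?W" for X Y using that by (rule lspan_add)
      show "msmult a X \<in> ?W" if "X \<in> ?W" for a X using that by (rule lspan_scale)
      show "0 \<in> ?W" by (rule lspan_zero)
      show "mk 0 (-1) 1 0 ** X ** mk 0 1 (-1) 0 \<in> ?W" if "X \<in> ?W" for X
        by (rule ci[OF _ _ _ that]) (simp_all add: entm algebra_simps)
      show "mk 1 0 0 (-1) ** X ** mk 1 0 0 (-1) \<in> ?W" if "X \<in> ?W" for X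
        by (rule ci[OF _ _ _ that]) (simp_all add: entm algebra_simps)
      show "mk 1 (-1) 1 1 ** X ** mk (1/2) (1/2) (-1/2) (1/2) \<in> ?W" if "X \<in> ?W" for X
        by (rule ci[OF _ _ _ that]) (simp_all add: entm field_simps)
    qed
  qed
next
  show "\<forall>(n::nat) (Y::nat set) (c::(nat \<Rightarrow> nat) \<Rightarrow> 'a::field).
            lspan (star_image symplectic n Y c) \<in> candidate_spaces symplectic"
    by (intro allI) (rule sympl_main)
qed

end
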